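(* Let $\lambda>0$, $f:\mathbb{R}^n\to\mathbb{R}$ twice continuously differentiable, $\varphi=f+\lambda\|\cdot\|_1$, and $x^0$ with $\mathcal{L}_\varphi(x^0)$ bounded and $f$ twice uniformly Lipschitz continuously differentiable on an open neighborhood of it. Suppose that at iteration $k$ of HPGNCM (described in the context) the MEO is invoked and returns a direction with curvature less than or equal to $-\frac12\varepsilon_h$ (so that a negative curvature step is taken). Then $$\varphi(x^k)-\varphi(x^{k+1})>\frac18c_{nc}\min\{\varepsilon_g\varepsilon_h,\varepsilon_h^3\},\qquad c_{nc}=\eta\theta^2\min\Big\{1,\frac{9(1-2\eta)^2}{L_H^2}\Big\}.$$
   Context: $L_H>0$ is such that $f(y)\le f(x)+\nabla f(x)^\top(y-x)+\frac12(y-x)^\top\nabla^2f(x)(y-x)+\frac{L_H}6\|y-x\|^3$ for $x,y\in\mathcal{L}_\varphi(x^0)=\{x:\varphi(x)\le\varphi(x^0)\}$. $\mathcal{G}_t(x):=t(x-\mathrm{prox}_{\frac\lambda t\|\cdot\|_1}(x-\frac1t\nabla f(x)))$; $\mathrm{sgn}(0)=1$; $g(x)_i=(\nabla f(x))_i+\lambda$ ($x_i>0$), $(\nabla f(x))_i-\lambda$ ($x_i<0$), $(\nabla f(x))_i-\min\{\max\{-\lambda,(\nabla f(x))_i\},\lambda\}$ ($x_i=0$). MEO: given symmetric $H$, tolerance $\epsilon$, failure probability $\sigma$, returns either $\hat\lambda\le-\epsilon/2$ and unit $v$ with $v^\top Hv=\hat\lambda$, or a certificate that $\lambda_{\min}(H)\ge-\epsilon$.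 HPGNCM (parameters $0<\varepsilon_g,\varepsilon_h<1$, $\beta>1$, $\bar\eta\in(0,1]$, $\eta\in(0,\frac12)$, $\theta\in(0,1)$, $t_0=1$, $t_k$ the most recently computed step parameter): if $\|\mathcal{G}_{t_k}(x^k)\|>\varepsilon_g$, proximal gradient step $x^{k+1}=\mathrm{prox}_{\frac\lambda{t_k}\|\cdot\|_1}(x^k-\frac1{t_k}\nabla f(x^k))$ with $t_k=\beta^{j_k}$, $j_k$ the smallest nonnegative $j$ with $\varphi(\mathrm{prox}_{\frac\lambda{\beta^j}\|\cdot\|_1}(x^k-\beta^{-j}\nabla f(x^k)))<\varphi(x^k)-\frac{\bar\eta}{\beta^j}\|\mathcal{G}_{\beta^j}(x^k)\|^2$. Otherwise, with $I^k_{\neq0}=\{i:x^k_i\neq0\}$, $I^k_0=\{i:x^k_i=0\}$, $S^k=\mathrm{Diag}(s)$ ($s_i=1$ if $|x^k_i|>\varepsilon_g^{1/2}$, else $s_i=x^k_i$), call MEO with $\epsilon=\varepsilon_h$ on $H_k=S^k_{I^k_{\neq0}}(\nabla^2f(x^k))_{I^k_{\neq0}}S^k_{I^k_{\neq0}}$; on certificate stop; otherwise with the returned unit $u$ ($u^\top H_ku=\lambda_{\min}\le-\varepsilon_h/2$) set $d^k_{I^k_{\neq0}}=-\mathrm{sgn}((g(x^k)_{I^k_{\neq0}})^\top S^k_{I^k_{\neq0}}u)|u^\top H_ku|u$, $d^k_{I^k_0}=0$, and $x^{k+1}=x^k+\theta^{j_k}S^kd^k$ with $j_k$ the smallest nonnegative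 integer $j$ such that $\varphi(x^k+\theta^jS^kd^k)<\varphi(x^k)-\eta\theta^{2j}\|d^k\|^3$. *)

theory Defs
  imports "HOL-Analysis.Analysis"
begin

definition l1norm :: "real^'n \<Rightarrow> real" where
  "l1norm x = (\<Sum>i\<in>UNIV. \<bar>x $ i\<bar>)"

definition phi :: "(real^'n \<Rightarrow> real) \<Rightarrow> real \<Rightarrow> real^'n \<Rightarrow> real" where
  "phi f lam x = f x + lam * l1norm x"

definition prox_l1 :: "real \<Rightarrow> real^'n \<Rightarrow> real^'n" where
  "prox_l1 c z = (THE y. \<forall>w. c * l1norm y + (norm (y - z))\<^sup>2 / 2
                              \<le> c * l1norm w + (norm (w - z))\<^sup>2 / 2)"

definition gmap :: "(real^'n \<Rightarrow> real^'n) \<Rightarrow> real \<Rightarrow> real \<Rightarrow> real^'n \<Rightarrow> real^'n" where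
  "gmap gradf lam t x = t *\<^sub>R (x - prox_l1 (lam / t) (x - (1 / t) *\<^sub>R gradf x))"

definition sgn1 :: "real \<Rightarrow> real" where
  "sgn1 a = (if a \<ge> 0 then 1 else -1)"

definition gvec :: "(real^'n \<Rightarrow> real^'n) \<Rightarrow> real \<Rightarrow> real^'n \<Rightarrow> real^'n" where
  "gvec gradf lam x = (\<chi> i. if x $ i > 0 then gradf x $ i + lam
                            else if x $ i < 0 then gradf x $ i - lam
                            else gradf x $ i - min (max (- lam) (gradf x $ i)) lam)"

definition Smat :: "real \<Rightarrow> real^'n \<Rightarrow> real^'n^'n" where
  "Smat eg x = (\<chi> i j. if i = j then (if \<bar>x $ i\<bar> > sqrt eg then 1 else x $ i) else 0)"

definition pg_ok :: "(real^'n \<Rightarrow> real) \<Rightarrow> (real^'n \<Rightarrow> real^'n) \<Rightarrow> real \<Rightarrow> real \<Rightarrow> real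
                     \<Rightarrow> real^'n \<Rightarrow> nat \<Rightarrow> bool" where
  "pg_ok f gradf lam beta etabar x j =
     (phi f lam (prox_l1 (lam / beta ^ j) (x - (1 / beta ^ j) *\<^sub>R gradf x))
        < phi f lam x - etabar / beta ^ j * (norm (gmap gradf lam (beta ^ j) x))\<^sup>2)"

text \<open>Proximal gradient iteration: state (x, t) with t the most recently computed
  step parameter goes to (x', t').\<close>
definition pg_step :: "(real^'n \<Rightarrow> real) \<Rightarrow> (real^'n \<Rightarrow> real^'n) \<Rightarrow> real \<Rightarrow> real \<Rightarrow> real \<Rightarrow> real
                     \<Rightarrow> real^'n \<Rightarrow> real \<Rightarrow> real^'n \<Rightarrow> real \<Rightarrow> bool" where
  "pg_step f gradf lam eg beta etabar x t x' t' =
     (norm (gmap gradf lam t x) > eg \<and>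
      (\<exists>j::nat. pg_ok f gradf lam beta etabar x j \<and> (\<forall>i<j. \<not> pg_ok f gradf lam beta etabar x i)
         \<and> t' = beta ^ j
         \<and> x' = prox_l1 (lam / beta ^ j) (x - (1 / beta ^ j) *\<^sub>R gradf x)))"

text \<open>Negative curvature direction built from an MEO output u (a unit vector supported
  on the index set {i. x_i \<noteq> 0}, i.e. a unit vector of R^{I_{\<noteq>0}} padded with zeros)\<close>
definition nc_dir :: "(real^'n \<Rightarrow> real^'n) \<Rightarrow> real \<Rightarrow> real \<Rightarrow> real^'n \<Rightarrow> real^'n \<Rightarrow> real \<Rightarrow> real^'n" where
  "nc_dir gradf lam eg x u lh =
     (- sgn1 (gvec gradf lam x \<bullet> (Smat eg x *v u)) * \<bar>lh\<bar>) *\<^sub>R u"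

definition nc_ok :: "(real^'n \<Rightarrow> real) \<Rightarrow> real \<Rightarrow> real \<Rightarrow> real \<Rightarrow> real^'n \<Rightarrow> real^'n \<Rightarrow> real^'n^'n
                     \<Rightarrow> nat \<Rightarrow> bool" where
  "nc_ok f lam eta theta x d S j =
     (phi f lam (x + theta ^ j *\<^sub>R (S *v d)) < phi f lam x - eta * theta ^ (2 * j) * norm d ^ 3)"

text \<open>Negative curvature iteration in which the MEO (called with epsilon = eps_h on
  H_k = S_I (Hess f)_II S_I) returns lh \<le> -eps_h/2 and unit u with u^T H_k u = lh.\<close>
definition nc_step :: "(real^'n \<Rightarrow> real) \<Rightarrow> (real^'n \<Rightarrow> real^'n) \<Rightarrow> (real^'n \<Rightarrow> real^'n^'n)
                     \<Rightarrow> real \<Rightarrow> real \<Rightarrow> real \<Rightarrow> real \<Rightarrow> real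
                     \<Rightarrow> real^'n \<Rightarrow> real \<Rightarrow> real^'n \<Rightarrow> real \<Rightarrow> bool" where
  "nc_step f gradf hessf lam eg eh eta theta x t x' t' =
     (norm (gmap gradf lam t x) \<le> eg \<and> t' = t \<and>
      (\<exists>u lh (j::nat).
          (\<forall>i. x $ i = 0 \<longrightarrow> u $ i = 0) \<and> norm u = 1 \<and>
          u \<bullet> ((Smat eg x ** hessf x ** Smat eg x) *v u) = lh \<and> lh \<le> - eh / 2 \<and>
          nc_ok f lam eta theta x (nc_dir gradf lam eg x u lh) (Smat eg x) j \<and>
          (\<forall>i<j. \<not> nc_ok f lam eta theta x (nc_dir gradf lam eg x u lh) (Smat eg x) i) \<and>
          x' = x + theta ^ j *\<^sub>R (Smat eg x *v nc_dir gradf lam eg x u lh)))"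

end

theory Submission
  imports Defs
begin

lemma line_deriv1:
  fixes f :: "real^'n \<Rightarrow> real" and gradf :: "real^'n \<Rightarrow> real^'n"
  assumes grad: "\<And>y. (f has_derivative (\<lambda>h. gradf y \<bullet> h)) (at y)"
  shows "((\<lambda>a. f (x + a *\<^sub>R v)) has_real_derivative (gradf (x + t *\<^sub>R v) \<bullet> v)) (at t)"
proof -
  have l: "((\<lambda>a. x + a *\<^sub>R v) has_derivative (\<lambda>a. a *\<^sub>R v)) (at t)"
    by (auto intro!: derivative_eq_intros)
  have "((\<lambda>a. f (x + a *\<^sub>R v)) has_derivative (\<lambda>a. gradf (x + t *\<^sub>R v) \<bullet> (a *\<^sub>R v))) (at t)"
    using has_derivative_compose[OF l grad] by (simp add: o_def)
  then show ?thesis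
    by (rule has_derivative_imp_has_field_derivative) (simp add: inner_scaleR_right)
qed

lemma line_deriv2:
  fixes gradf :: "real^'n \<Rightarrow> real^'n" and hessf :: "real^'n \<Rightarrow> real^'n^'n"
  assumes hess: "\<And>y. (gradf has_derivative (\<lambda>h. hessf y *v h)) (at y)"
  shows "((\<lambda>a. gradf (x + a *\<^sub>R v) \<bullet> v) has_real_derivative ((hessf (x + t *\<^sub>R v) *v v) \<bullet> v)) (at t)"
proof -
  have l: "((\<lambda>a. x + a *\<^sub>R v) has_derivative (\<lambda>a. a *\<^sub>R v)) (at t)"
    by (auto intro!: derivative_eq_intros)
  have "((\<lambda>a. gradf (x + a *\<^sub>R v)) has_derivative (\<lambda>a. hessf (x + t *\<^sub>R v) *v (a *\<^sub>R v))) (at t)"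
    using has_derivative_compose[OF l hess] by (simp add: o_def)
  then have "((\<lambda>a. gradf (x + a *\<^sub>R v) \<bullet> v) has_derivative (\<lambda>a. (hessf (x + t *\<^sub>R v) *v (a *\<^sub>R v)) \<bullet> v)) (at t)"
    by (rule has_derivative_inner_left)
  then show ?thesis
    by (rule has_derivative_imp_has_field_derivative) (simp add: matrix_vector_mult_scaleR)
qed

lemma l1norm_cont: "continuous_on UNIV (l1norm :: real^'n \<Rightarrow> real)"
  unfolding l1norm_def[abs_def]
  by (intro continuous_intros)

lemma phi_line_cont:
  fixes f :: "real^'n \<Rightarrow> real" and gradf :: "real^'n \<Rightarrow> real^'n"
  assumes grad: "\<And>y. (f has_derivative (\<lambda>h. gradf y \<bullet> h)) (at y)"
  shows "continuous_on UNIV (\<lambda>a::real. phi f lam (x + a *\<^sub>R v))"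
proof -
  have cf: "continuous_on UNIV f"
    by (rule continuous_at_imp_continuous_on) (use has_derivative_continuous[OF grad] in blast)
  have l: "continuous_on UNIV (\<lambda>a::real. x + a *\<^sub>R v)" by (intro continuous_intros)
  have f1: "continuous_on UNIV (\<lambda>a::real. f (x + a *\<^sub>R v))"
    by (rule continuous_on_compose2[OF cf l]) simp
  have f2: "continuous_on UNIV (\<lambda>a::real. l1norm (x + a *\<^sub>R v))"
    by (rule continuous_on_compose2[OF l1norm_cont l]) simp
  show ?thesis
    unfolding phi_def by (intro continuous_on_add continuous_on_mult[OF continuous_on_const] f1 f2)
qed

lemma Smat_mult: "(Smat eg x *v w) $ i = (if \<bar>x $ i\<bar> > sqrt eg then 1 else x $ i) * w $ i"
  unfolding Smat_def matrix_vector_mult_def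
  by (simp add: if_distrib[of "\<lambda>z. z * _"] cong: if_cong)

lemma Smat_sym: "u \<bullet> (Smat eg x *v w) = (Smat eg x *v u) \<bullet> w"
  unfolding inner_vec_def by (simp add: Smat_mult mult_ac)

lemma l1_noflip:
  fixes x w :: "real^'n"
  assumes "\<And>i. w $ i = 0 \<or> \<bar>w $ i\<bar> < \<bar>x $ i\<bar>"
  shows "l1norm (x + w) = l1norm x + (\<Sum>i\<in>UNIV. sgn (x $ i) * w $ i)"
proof -
  have "\<bar>x $ i + w $ i\<bar> = \<bar>x $ i\<bar> + sgn (x $ i) * w $ i" for i
    using assms[of i] by (auto simp: abs_if sgn_if)
  then show ?thesis unfolding l1norm_def by (simp add: sum.distrib)
qed
lemma quad_cont: "continuous_on UNIV (\<lambda>A::real^'n^'n. (A *v v) \<bullet> v)"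
proof -
  have eq: "(\<lambda>A::real^'n^'n. (A *v v) \<bullet> v) = (\<lambda>A. \<Sum>i\<in>UNIV. (\<Sum>j\<in>UNIV. A$i$j * v$j) * v$i)"
    by (simp add: fun_eq_iff inner_vec_def matrix_vector_mult_def)
  have c: "continuous_on UNIV (\<lambda>A::real^'n^'n. A$i$j)" for i j
    by (intro continuous_on_component continuous_on_id)
  show ?thesis unfolding eq
    by (intro continuous_on_sum continuous_on_mult_right continuous_on_mult_left c)
qed

lemma nc_core:
  fixes f :: "real^'n \<Rightarrow> real" and gradf :: "real^'n \<Rightarrow> real^'n"
    and hessf :: "real^'n \<Rightarrow> real^'n^'n"
  assumes grad: "\<And>y. (f has_derivative (\<lambda>h. gradf y \<bullet> h)) (at y)"
    and hess: "\<And>y. (gradf has_derivative (\<lambda>h. hessf y *v h)) (at y)"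
    and hess_cont: "continuous_on UNIV hessf"
    and LH: "LH > 0"
    and cubic: "\<forall>y\<in>{y. phi f lam y \<le> phi f lam x0}. \<forall>z\<in>{y. phi f lam y \<le> phi f lam x0}.
                  f z \<le> f y + gradf y \<bullet> (z - y) + (1/2) * ((z - y) \<bullet> (hessf y *v (z - y)))
                        + LH / 6 * norm (z - y) ^ 3"
    and eg: "0 < eg" "eg < 1"
    and eta: "0 < eta" "eta < 1/2"
    and xL: "phi f lam x \<le> phi f lam x0"
    and u0: "\<forall>i. x $ i = 0 \<longrightarrow> u $ i = 0" and nu: "norm u = 1"
    and lhdef: "u \<bullet> ((Smat eg x ** hessf x ** Smat eg x) *v u) = lh" and lhneg: "lh < 0"
  shows "norm (nc_dir gradf lam eg x u lh) = \<bar>lh\<bar> \<and>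
    (\<forall>a. 0 < a \<longrightarrow> a < min (3 * (1 - 2 * eta) / LH) (min 1 (sqrt eg / \<bar>lh\<bar>)) \<longrightarrow>
       phi f lam (x + a *\<^sub>R (Smat eg x *v nc_dir gradf lam eg x u lh))
         < phi f lam x - eta * a\<^sup>2 * \<bar>lh\<bar> ^ 3)"
proof -
  define S where "S = Smat eg x"
  define H where "H = hessf x"
  define sv where "sv = (\<lambda>i. if \<bar>x $ i\<bar> > sqrt eg then 1 else x $ i)"
  define w where "w = S *v u"
  define c where "c = - sgn1 (gvec gradf lam x \<bullet> w) * \<bar>lh\<bar>"
  define d where "d = nc_dir gradf lam eg x u lh"
  define v where "v = S *v d"
  define L where "L = {y. phi f lam y \<le> phi f lam x0}"
  define b where "b = min (3 * (1 - 2 * eta) / LH) (min 1 (sqrt eg / \<bar>lh\<bar>))"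
  have d_eq: "d = c *\<^sub>R u" unfolding d_def c_def nc_dir_def w_def S_def by simp
  have v_eq: "v = c *\<^sub>R w" unfolding v_def d_eq w_def by (simp add: matrix_vector_mult_scaleR)
  have absc: "\<bar>c\<bar> = \<bar>lh\<bar>" unfolding c_def sgn1_def by (auto simp: abs_mult)
  have c2: "c\<^sup>2 = lh\<^sup>2" using absc by (metis power2_abs)
  have normd: "norm d = \<bar>lh\<bar>" using absc nu d_eq by simp
  have sqeg: "sqrt eg < 1" "0 < sqrt eg" using eg by auto
  have svle: "\<bar>sv i\<bar> \<le> 1" for i
  proof (cases "sqrt eg < \<bar>x $ i\<bar>")
    case False
    have "\<bar>x $ i\<bar> < 1" using False sqeg(1) by linarith
    then show ?thesis unfolding sv_def using False by simp
  qed (simp add: sv_def)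
  have vcomp: "v $ i = sv i * d $ i" for i unfolding v_def S_def sv_def by (rule Smat_mult)
  have wcomp: "w $ i = sv i * u $ i" for i unfolding w_def S_def sv_def by (rule Smat_mult)
  have v0: "x $ i = 0 \<Longrightarrow> v $ i = 0" for i using u0 by (simp add: vcomp d_eq)
  have di: "\<bar>d $ i\<bar> \<le> \<bar>lh\<bar>" for i using component_le_norm_cart[of d i] normd by simp
  have normv: "norm v \<le> \<bar>lh\<bar>"
  proof -
    have "norm v \<le> norm d"
    proof (rule norm_le_componentwise_cart)
      fix i show "norm (v $ i) \<le> norm (d $ i)"
        using svle[of i] by (simp add: vcomp abs_mult mult_left_le_one_le)
    qed
    then show ?thesis using normd by simp
  qed
  have noflip: "\<And>i. (a *\<^sub>R v) $ i = 0 \<or> \<bar>(a *\<^sub>R v) $ i\<bar> < \<bar>x $ i\<bar>"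
    if a: "0 < a" "a \<le> 1" "a \<le> sqrt eg / \<bar>lh\<bar>" for a
  proof -
    fix i
    have alh: "a * \<bar>lh\<bar> \<le> sqrt eg" using a lhneg by (simp add: field_simps)
    have ad: "a * \<bar>d $ i\<bar> \<le> sqrt eg" using alh di[of i] a(1)
      by (meson mult_left_mono less_imp_le order_trans)
    show "(a *\<^sub>R v) $ i = 0 \<or> \<bar>(a *\<^sub>R v) $ i\<bar> < \<bar>x $ i\<bar>"
    proof (cases "x $ i = 0")
      case True then show ?thesis using v0 by simp
    next
      case False
      show ?thesis
      proof (cases "\<bar>x $ i\<bar> > sqrt eg")
        case True
        then have "\<bar>(a *\<^sub>R v) $ i\<bar> = a * \<bar>d $ i\<bar>" using a by (simp add: vcomp sv_def abs_mult)
        then show ?thesis using ad True by simp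
      next
        case nT: False
        then have "\<bar>(a *\<^sub>R v) $ i\<bar> = (a * \<bar>d $ i\<bar>) * \<bar>x $ i\<bar>" using a by (simp add: vcomp sv_def abs_mult)
        also have "\<dots> \<le> sqrt eg * \<bar>x $ i\<bar>" using ad by (simp add: mult_right_mono)
        also have "\<dots> < \<bar>x $ i\<bar>" using sqeg False by simp
        finally show ?thesis by simp
      qed
    qed
  qed
  have lin: "gradf x \<bullet> v + lam * (\<Sum>i\<in>UNIV. sgn (x $ i) * v $ i) = gvec gradf lam x \<bullet> v"
  proof -
    have "gradf x \<bullet> v + lam * (\<Sum>i\<in>UNIV. sgn (x $ i) * v $ i)
        = (\<Sum>i\<in>UNIV. gradf x $ i * v $ i + lam * (sgn (x $ i) * v $ i))"
      unfolding inner_vec_def by (simp add: sum.distrib sum_distrib_left)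
    also have "\<dots> = (\<Sum>i\<in>UNIV. (gradf x $ i + lam * sgn (x $ i)) * v $ i)"
      by (rule sum.cong) (simp_all add: distrib_right)
    also have "\<dots> = (\<Sum>i\<in>UNIV. gvec gradf lam x $ i * v $ i)"
      by (rule sum.cong) (auto simp: gvec_def sgn_if v0)
    finally show ?thesis unfolding inner_vec_def by simp
  qed
  have linneg: "gvec gradf lam x \<bullet> v \<le> 0"
    unfolding v_eq c_def sgn1_def by (auto simp: mult_nonneg_nonpos mult_nonpos_nonneg)
  have quad: "v \<bullet> (H *v v) = lh ^ 3"
  proof -
    have "lh = u \<bullet> (S *v (H *v w))" unfolding lhdef[symmetric] w_def S_def H_def
      by (simp add: matrix_vector_mul_assoc matrix_mul_assoc)
    also have "\<dots> = w \<bullet> (H *v w)" unfolding S_def w_def by (rule Smat_sym)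
    finally have "v \<bullet> (H *v v) = c\<^sup>2 * lh" unfolding v_eq
      by (simp add: matrix_vector_mult_scaleR power2_eq_square)
    then show ?thesis using c2 by (simp add: power2_eq_square power3_eq_cube)
  qed
  have lh3: "lh ^ 3 = - (\<bar>lh\<bar> ^ 3)" using lhneg by simp
  have phiexp: "phi f lam (x + a *\<^sub>R v) = f (x + a *\<^sub>R v) + lam * l1norm x
                 + a * (lam * (\<Sum>i\<in>UNIV. sgn (x $ i) * v $ i))"
    if a: "0 < a" "a \<le> 1" "a \<le> sqrt eg / \<bar>lh\<bar>" for a
  proof -
    have "l1norm (x + a *\<^sub>R v) = l1norm x + (\<Sum>i\<in>UNIV. sgn (x $ i) * (a *\<^sub>R v) $ i)"
      by (rule l1_noflip) (rule noflip[OF a])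
    then show ?thesis unfolding phi_def by (simp add: sum_distrib_left algebra_simps)
  qed
  have inL: "phi f lam (x + a *\<^sub>R v) < phi f lam x - eta * a\<^sup>2 * \<bar>lh\<bar> ^ 3"
    if a: "0 < a" "a < b" and aL: "phi f lam (x + a *\<^sub>R v) \<le> phi f lam x0" for a
  proof -
    have a1: "a \<le> 1" "a \<le> sqrt eg / \<bar>lh\<bar>" "a < 3 * (1 - 2 * eta) / LH" using a unfolding b_def by auto
    have "f (x + a *\<^sub>R v) \<le> f x + gradf x \<bullet> (a *\<^sub>R v) + (1/2) * ((a *\<^sub>R v) \<bullet> (H *v (a *\<^sub>R v)))
                        + LH / 6 * norm (a *\<^sub>R v) ^ 3"
    proof -
      have "x \<in> L" "x + a *\<^sub>R v \<in> L" using xL aL unfolding L_def by auto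
      then have "f (x + a *\<^sub>R v) \<le> f x + gradf x \<bullet> ((x + a *\<^sub>R v) - x)
         + (1/2) * (((x + a *\<^sub>R v) - x) \<bullet> (hessf x *v ((x + a *\<^sub>R v) - x)))
         + LH / 6 * norm ((x + a *\<^sub>R v) - x) ^ 3"
        using cubic unfolding L_def by blast
      then show ?thesis unfolding H_def by simp
    qed
    also have "\<dots> = f x + a * (gradf x \<bullet> v) + a\<^sup>2 / 2 * lh ^ 3 + LH / 6 * a ^ 3 * norm v ^ 3"
    proof -
      have e1: "gradf x \<bullet> (a *\<^sub>R v) = a * (gradf x \<bullet> v)" by simp
      have e2: "(a *\<^sub>R v) \<bullet> (H *v (a *\<^sub>R v)) = a\<^sup>2 * lh ^ 3"
        by (simp add: matrix_vector_mult_scaleR quad power2_eq_square)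
      have e3: "norm (a *\<^sub>R v) ^ 3 = a ^ 3 * norm v ^ 3" using a by (simp add: power_mult_distrib)
      show ?thesis unfolding e1 e2 e3 by simp
    qed
    also have "\<dots> \<le> f x + a * (gradf x \<bullet> v) + a\<^sup>2 / 2 * lh ^ 3 + LH / 6 * a ^ 3 * \<bar>lh\<bar> ^ 3"
      using normv LH a by (intro add_left_mono mult_left_mono power_mono) auto
    finally have fb0: "f (x + a *\<^sub>R v) \<le> f x + a * (gradf x \<bullet> v) + a\<^sup>2 / 2 * lh ^ 3 + LH / 6 * a ^ 3 * \<bar>lh\<bar> ^ 3" .
    have alg: "a\<^sup>2 / 2 * (- A) + LH / 6 * a ^ 3 * A = - (a\<^sup>2 * A * (1/2 - LH * a / 6))" for A :: real
      by (simp add: algebra_simps power2_eq_square power3_eq_cube)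
    have fb: "f (x + a *\<^sub>R v) \<le> f x + a * (gradf x \<bullet> v) - a\<^sup>2 * \<bar>lh\<bar> ^ 3 * (1/2 - LH * a / 6)"
      using fb0 alg[of "\<bar>lh\<bar> ^ 3"] unfolding lh3 by linarith
    have "phi f lam (x + a *\<^sub>R v) \<le> phi f lam x + a * (gvec gradf lam x \<bullet> v) - a\<^sup>2 * \<bar>lh\<bar> ^ 3 * (1/2 - LH * a / 6)"
    proof -
      have e1: "a * (gvec gradf lam x \<bullet> v) = a * (gradf x \<bullet> v) + a * (lam * (\<Sum>i\<in>UNIV. sgn (x $ i) * v $ i))"
        by (simp only: lin[symmetric] distrib_left)
      show ?thesis using phiexp[OF a(1) a1(1,2)] fb e1 unfolding phi_def by linarith
    qed
    also have "\<dots> \<le> phi f lam x - a\<^sup>2 * \<bar>lh\<bar> ^ 3 * (1/2 - LH * a / 6)"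
      using linneg a by (simp add: mult_nonneg_nonpos)
    also have "\<dots> < phi f lam x - eta * a\<^sup>2 * \<bar>lh\<bar> ^ 3"
    proof -
      have "LH * a < 3 * (1 - 2 * eta)" using a1(3) LH by (simp add: field_simps)
      then have "eta < 1/2 - LH * a / 6" by simp
      moreover have "0 < a\<^sup>2 * \<bar>lh\<bar> ^ 3" using a lhneg by (intro mult_pos_pos) auto
      ultimately have "a\<^sup>2 * \<bar>lh\<bar> ^ 3 * eta < a\<^sup>2 * \<bar>lh\<bar> ^ 3 * (1/2 - LH * a / 6)"
        by (rule mult_strict_left_mono)
      then show ?thesis by (simp add: algebra_simps)
    qed
    finally show ?thesis .
  qed
  define q where "q = (\<lambda>t. (hessf (x + t *\<^sub>R v) *v v) \<bullet> v)"
  have qcont: "isCont q 0"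
  proof -
    have l: "continuous_on UNIV (\<lambda>t::real. x + t *\<^sub>R v)" by (intro continuous_intros)
    have h: "continuous_on UNIV (\<lambda>t::real. hessf (x + t *\<^sub>R v))"
      by (rule continuous_on_compose2[OF hess_cont l]) simp
    have "continuous_on UNIV q" unfolding q_def
      by (rule continuous_on_compose2[OF quad_cont h]) simp
    then show ?thesis by (simp add: continuous_on_eq_continuous_at)
  qed
  have q0: "q 0 = lh ^ 3"
  proof -
    have "q 0 = (H *v v) \<bullet> v" unfolding q_def H_def by simp
    also have "\<dots> = v \<bullet> (H *v v)" by (rule inner_commute)
    finally show ?thesis using quad by simp
  qed
  have l3neg: "lh ^ 3 < 0" using lh3 lhneg by simp
  have "1 * lh ^ 3 < (2 * eta) * lh ^ 3"
    by (rule mult_strict_right_mono_neg) (use eta l3neg in auto)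
  then have "lh ^ 3 < 2 * eta * lh ^ 3" by simp
  then have "\<forall>\<^sub>F t in at 0. q t < 2 * eta * lh ^ 3"
    using order_tendstoD(2)[OF qcont[unfolded isCont_def]] q0 by simp
  then obtain \<delta> where \<delta>: "\<delta> > 0" "\<And>t. t \<noteq> 0 \<Longrightarrow> dist t 0 < \<delta> \<Longrightarrow> q t < 2 * eta * lh ^ 3"
    unfolding eventually_at by auto
  have small: "phi f lam (x + a *\<^sub>R v) < phi f lam x - eta * a\<^sup>2 * \<bar>lh\<bar> ^ 3"
    if a: "0 < a" "a < b" "a < \<delta>" for a
  proof -
    have a1: "a \<le> 1" "a \<le> sqrt eg / \<bar>lh\<bar>" using a unfolding b_def by auto
    define hh where "hh = (\<lambda>t. f (x + t *\<^sub>R v))"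
    define h1 where "h1 = (\<lambda>t. gradf (x + t *\<^sub>R v) \<bullet> v)"
    define df where "df = (\<lambda>m::nat. if m = 0 then hh else if m = 1 then h1 else q)"
    have "\<exists>t. 0 < t \<and> t < a \<and>
      hh a = (\<Sum>m<2. (df m 0 / fact m) * (a - 0)^m) + (df 2 t / fact 2) * (a - 0)^2"
    proof (rule Taylor_up[where diff = df and a = 0])
      show "\<forall>m t. m < 2 \<and> 0 \<le> t \<and> t \<le> a \<longrightarrow> DERIV (df m) t :> df (Suc m) t"
      proof (intro allI impI)
        fix m :: nat and t :: real assume "m < 2 \<and> 0 \<le> t \<and> t \<le> a"
        then have "m = 0 \<or> m = 1" by auto
        then show "DERIV (df m) t :> df (Suc m) t"
          using line_deriv1[OF grad, of x v t] line_deriv2[OF hess, of x v t]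
          unfolding df_def hh_def h1_def q_def by (auto simp: inner_commute)
      qed
    qed (use a in \<open>simp_all add: df_def\<close>)
    then obtain t where t: "0 < t" "t < a"
      and t3: "hh a = (\<Sum>m<2. (df m 0 / fact m) * (a - 0)^m) + (df 2 t / fact 2) * (a - 0)^2"
      by blast
    have s2: "(\<Sum>m<2. (df m 0 / fact m) * (a - 0)^m) = hh 0 + h1 0 * a"
      by (simp add: df_def eval_nat_numeral)
    have d2: "df 2 t / fact 2 * (a - 0)^2 = q t / 2 * a\<^sup>2"
      by (simp add: df_def)
    have t: "0 < t" "t < a" "hh a = hh 0 + h1 0 * a + q t / 2 * a\<^sup>2"
      using t t3 s2 d2 by simp_all
    have qt: "q t < 2 * eta * lh ^ 3" using \<delta>(2)[of t] t a by auto
    have "phi f lam (x + a *\<^sub>R v) = f x + a * (gvec gradf lam x \<bullet> v) + q t / 2 * a\<^sup>2 + lam * l1norm x"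
    proof -
      have e1: "a * (gvec gradf lam x \<bullet> v) = a * (gradf x \<bullet> v) + a * (lam * (\<Sum>i\<in>UNIV. sgn (x $ i) * v $ i))"
        by (simp only: lin[symmetric] distrib_left)
      have "f (x + a *\<^sub>R v) = f x + a * (gradf x \<bullet> v) + q t / 2 * a\<^sup>2"
        using t(3) unfolding hh_def h1_def by (simp add: mult.commute)
      then show ?thesis using phiexp[OF a(1) a1] e1 by linarith
    qed
    also have "\<dots> \<le> f x + q t / 2 * a\<^sup>2 + lam * l1norm x"
      using linneg a by (simp add: mult_nonneg_nonpos)
    also have "\<dots> < f x + eta * lh ^ 3 * a\<^sup>2 + lam * l1norm x"
      using qt a by (simp add: mult_strict_right_mono)
    finally have fin: "phi f lam (x + a *\<^sub>R v) < f x + eta * lh ^ 3 * a\<^sup>2 + lam * l1norm x" .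
    have "eta * lh ^ 3 * a\<^sup>2 = - (eta * a\<^sup>2 * \<bar>lh\<bar> ^ 3)" unfolding lh3 by simp
    then show ?thesis using fin unfolding phi_def by linarith
  qed
  have main: "\<forall>a. 0 < a \<longrightarrow> a < b \<longrightarrow> phi f lam (x + a *\<^sub>R v) < phi f lam x - eta * a\<^sup>2 * \<bar>lh\<bar> ^ 3"
  proof (rule ccontr)
    define R where "R = (\<lambda>a. phi f lam (x + a *\<^sub>R v) - phi f lam x + eta * a\<^sup>2 * \<bar>lh\<bar> ^ 3)"
    have Rcont: "continuous_on UNIV R" unfolding R_def
      by (intro continuous_intros phi_line_cont[OF grad])
    define F where "F = {a. 0 < a \<and> a < b \<and> \<not> R a < 0}"
    assume "\<not> ?thesis"
    then have Fne: "F \<noteq> {}" unfolding F_def R_def by auto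
    have Fbdd: "bdd_below F" unfolding F_def by (auto intro: bdd_belowI[of _ 0])
    define s where "s = Inf F"
    have Fdelta: "a \<ge> \<delta>" if "a \<in> F" for a
    proof (rule ccontr)
      have a: "0 < a" "a < b" "\<not> R a < 0" using that unfolding F_def by auto
      assume "\<not> a \<ge> \<delta>"
      then have "a < \<delta>" by simp
      then have "phi f lam (x + a *\<^sub>R v) < phi f lam x - eta * a\<^sup>2 * \<bar>lh\<bar> ^ 3" using small a by blast
      then show False using a(3) unfolding R_def by linarith
    qed
    have spos: "s \<ge> \<delta>" unfolding s_def by (rule cInf_greatest[OF Fne]) (use Fdelta in auto)
    obtain a0 where a0: "a0 \<in> F" using Fne by auto
    have sb: "s < b" using cInf_lower[OF a0 Fbdd] a0 unfolding s_def F_def by auto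
    have below: "R a < 0" if "0 < a" "a < s" for a
    proof (rule ccontr)
      assume "\<not> R a < 0"
      then have "a \<in> F" using that sb unfolding F_def by auto
      then have "s \<le> a" unfolding s_def using cInf_lower Fbdd by blast
      then show False using that by simp
    qed
    have "phi f lam (x + s *\<^sub>R v) \<le> phi f lam x0"
    proof (rule tendsto_le[of "at_left s"])
      show "((\<lambda>a. phi f lam (x + a *\<^sub>R v)) \<longlongrightarrow> phi f lam (x + s *\<^sub>R v)) (at_left s)"
      proof -
        have "isCont (\<lambda>a. phi f lam (x + a *\<^sub>R v)) s"
          using phi_line_cont[OF grad, of lam x v] by (simp add: continuous_on_eq_continuous_at)
        then show ?thesis unfolding isCont_def by (rule tendsto_within_subset) simp
      qed
      show "((\<lambda>a. phi f lam x0) \<longlongrightarrow> phi f lam x0) (at_left s)" by simp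
      have "\<forall>\<^sub>F a in at_left s. a \<in> {0<..<s}" using eventually_at_left_real spos \<delta> by simp
      then show "\<forall>\<^sub>F a in at_left s. phi f lam (x + a *\<^sub>R v) \<le> phi f lam x0"
      proof (rule eventually_mono)
        fix a assume "a \<in> {0<..<s}"
        then have "R a < 0" using below by auto
        moreover have "eta * a\<^sup>2 * \<bar>lh\<bar> ^ 3 \<ge> 0" using eta by simp
        ultimately show "phi f lam (x + a *\<^sub>R v) \<le> phi f lam x0" using xL unfolding R_def by linarith
      qed
    qed simp
    then have Rs: "R s < 0" using inL[of s] spos \<delta> sb unfolding R_def by simp
    have "isCont R s" using Rcont by (simp add: continuous_on_eq_continuous_at)
    then have "\<forall>\<^sub>F a in at s. R a < 0" unfolding isCont_def
      using Rs by (rule order_tendstoD(2))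
    then obtain e where e: "e > 0" "\<And>a. a \<noteq> s \<Longrightarrow> dist a s < e \<Longrightarrow> R a < 0"
      unfolding eventually_at by auto
    have "Inf F < s + e" using e unfolding s_def by simp
    then obtain a where a: "a \<in> F" "a < s + e" using cInf_less_iff[OF Fne Fbdd] by auto
    have "s \<le> a" using cInf_lower[OF a(1) Fbdd] unfolding s_def .
    have "a \<noteq> s" using a(1) Rs unfolding F_def by auto
    moreover have "dist a s < e" using a e \<open>s \<le> a\<close> by (simp add: dist_real_def)
    ultimately show False using e(2) a(1) unfolding F_def by auto
  qed
  show ?thesis using main normd unfolding b_def v_def d_def S_def by blast
qed


lemma final_arith:
  fixes eta theta LH eg eh lh b tj :: real
  assumes eta: "0 < eta" "eta < 1/2" and theta: "0 < theta" "theta < 1" and LH: "LH > 0"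
    and eg: "0 < eg" "eg < 1" and eh: "0 < eh" and lh: "lh \<le> - eh / 2"
    and b: "b = min (3 * (1 - 2 * eta) / LH) (min 1 (sqrt eg / \<bar>lh\<bar>))"
    and tj: "tj \<ge> theta * b"
  shows "eta * tj\<^sup>2 * \<bar>lh\<bar> ^ 3
     \<ge> 1/8 * (eta * theta\<^sup>2 * min 1 (9 * (1 - 2 * eta)\<^sup>2 / LH\<^sup>2)) * min (eg * eh) (eh ^ 3)"
proof -
  define m where "m = min 1 (9 * (1 - 2 * eta)\<^sup>2 / LH\<^sup>2)"
  define M where "M = min (eg * eh) (eh ^ 3)"
  have lhpos: "\<bar>lh\<bar> \<ge> eh / 2" using lh eh by linarith
  have lh3: "\<bar>lh\<bar> ^ 3 \<ge> eh ^ 3 / 8"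
  proof -
    have "(eh / 2) ^ 3 \<le> \<bar>lh\<bar> ^ 3" using lhpos eh by (intro power_mono) auto
    then show ?thesis by (simp add: power_divide)
  qed
  have m01: "0 \<le> m" "m \<le> 1" unfolding m_def by auto
  have M0: "0 \<le> M" "M \<le> eh ^ 3" "M \<le> eg * eh" unfolding M_def using eg eh by auto
  have p1: "3 * (1 - 2 * eta) / LH > 0" using eta LH by simp
  have lh0': "\<bar>lh\<bar> > 0" using lh eh by linarith
  have p2: "sqrt eg / \<bar>lh\<bar> > 0" using eg lh0' by simp
  have bpos: "b > 0" unfolding b using p1 p2 by simp
  have key: "b\<^sup>2 * \<bar>lh\<bar> ^ 3 \<ge> m * M / 8"
  proof -
    consider "b = 3 * (1 - 2 * eta) / LH" | "b = 1" | "b = sqrt eg / \<bar>lh\<bar>" using b by linarith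
    then show ?thesis
    proof cases
      case 1
      have "b\<^sup>2 = 9 * (1 - 2 * eta)\<^sup>2 / LH\<^sup>2" unfolding 1 by (simp add: power_divide power2_eq_square algebra_simps)
      then have "m \<le> b\<^sup>2" unfolding m_def by simp
      moreover have "M / 8 \<le> \<bar>lh\<bar> ^ 3" using lh3 M0 by simp
      ultimately have "m * (M / 8) \<le> b\<^sup>2 * \<bar>lh\<bar> ^ 3" using m01 M0 by (intro mult_mono) auto
      then show ?thesis by simp
    next
      case 2
      have "M / 8 \<le> \<bar>lh\<bar> ^ 3" using lh3 M0 by simp
      then have "m * (M / 8) \<le> 1 * \<bar>lh\<bar> ^ 3" using m01 M0 by (intro mult_mono) auto
      then show ?thesis using 2 by simp
    next
      case 3
      have lh0: "\<bar>lh\<bar> > 0" using lhpos eh by linarith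
      have "b\<^sup>2 * \<bar>lh\<bar> ^ 3 = eg * \<bar>lh\<bar>" unfolding 3 using eg lh0
        by (simp add: power_divide power3_eq_cube power2_eq_square field_simps)
      also have "\<dots> \<ge> eg * eh / 2" using lhpos eg by (simp add: mult_left_mono)
      finally have "b\<^sup>2 * \<bar>lh\<bar> ^ 3 \<ge> eg * eh / 2" .
      moreover have "m * M / 8 \<le> eg * eh / 2"
      proof -
        have "m * M \<le> 1 * M" using m01 M0 by (intro mult_right_mono) auto
        moreover have "0 \<le> eg * eh" using eg eh by simp
        ultimately show ?thesis using M0 by linarith
      qed
      ultimately show ?thesis by linarith
    qed
  qed
  have "(theta * b)\<^sup>2 \<le> tj\<^sup>2" using tj theta bpos by (intro power_mono) auto
  then have tb: "theta\<^sup>2 * b\<^sup>2 \<le> tj\<^sup>2" by (simp only: power_mult_distrib)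
  have "theta\<^sup>2 * b\<^sup>2 * \<bar>lh\<bar> ^ 3 \<le> tj\<^sup>2 * \<bar>lh\<bar> ^ 3"
    by (rule mult_right_mono[OF tb]) simp
  then have "theta\<^sup>2 * (b\<^sup>2 * \<bar>lh\<bar> ^ 3) \<le> tj\<^sup>2 * \<bar>lh\<bar> ^ 3"
    by (simp only: mult.assoc)
  moreover have "theta\<^sup>2 * (m * M / 8) \<le> theta\<^sup>2 * (b\<^sup>2 * \<bar>lh\<bar> ^ 3)"
    using key by (intro mult_left_mono) auto
  ultimately have "theta\<^sup>2 * (m * M / 8) \<le> tj\<^sup>2 * \<bar>lh\<bar> ^ 3" by linarith
  then have ineq: "eta * (theta\<^sup>2 * (m * M / 8)) \<le> eta * (tj\<^sup>2 * \<bar>lh\<bar> ^ 3)"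
    using eta by (intro mult_left_mono) auto
  have E1: "1/8 * (eta * theta\<^sup>2 * m) * M = eta * (theta\<^sup>2 * (m * M / 8))" by simp
  have E2: "eta * tj\<^sup>2 * \<bar>lh\<bar> ^ 3 = eta * (tj\<^sup>2 * \<bar>lh\<bar> ^ 3)" by (rule mult.assoc)
  have "1/8 * (eta * theta\<^sup>2 * m) * M \<le> eta * tj\<^sup>2 * \<bar>lh\<bar> ^ 3"
    unfolding E1 E2 by (rule ineq)
  then show ?thesis unfolding m_def M_def .
qed

theorem lemma6:
  fixes f :: "real^'n \<Rightarrow> real" and gradf :: "real^'n \<Rightarrow> real^'n"
    and hessf :: "real^'n \<Rightarrow> real^'n^'n"
    and lam eg eh beta etabar eta theta LH :: real
    and x0 :: "real^'n" and x :: "nat \<Rightarrow> real^'n" and t :: "nat \<Rightarrow> real" and k :: nat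
  assumes lam: "lam > 0"
    and grad: "\<And>y. (f has_derivative (\<lambda>h. gradf y \<bullet> h)) (at y)"
    and hess: "\<And>y. (gradf has_derivative (\<lambda>h. hessf y *v h)) (at y)"
    and hess_cont: "continuous_on UNIV hessf"
    and bdd: "bounded {y. phi f lam y \<le> phi f lam x0}"
    and lipH: "\<exists>U. open U \<and> {y. phi f lam y \<le> phi f lam x0} \<subseteq> U \<and>
                 (\<exists>L. \<forall>y\<in>U. \<forall>z\<in>U. norm (hessf y - hessf z) \<le> L * norm (y - z))"
    and LH: "LH > 0"
    and cubic: "\<forall>y\<in>{y. phi f lam y \<le> phi f lam x0}. \<forall>z\<in>{y. phi f lam y \<le> phi f lam x0}.
                  f z \<le> f y + gradf y \<bullet> (z - y) + (1/2) * ((z - y) \<bullet> (hessf y *v (z - y)))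
                        + LH / 6 * norm (z - y) ^ 3"
    and eg: "0 < eg" "eg < 1" and eh: "0 < eh" "eh < 1"
    and beta: "beta > 1" and etabar: "0 < etabar" "etabar \<le> 1"
    and eta: "0 < eta" "eta < 1/2" and theta: "0 < theta" "theta < 1"
    and init: "x 0 = x0" "t 0 = 1"
    and run: "\<forall>i<k. pg_step f gradf lam eg beta etabar (x i) (t i) (x (Suc i)) (t (Suc i))
                   \<or> nc_step f gradf hessf lam eg eh eta theta (x i) (t i) (x (Suc i)) (t (Suc i))"
    and ncstep: "nc_step f gradf hessf lam eg eh eta theta (x k) (t k) (x (Suc k)) (t (Suc k))"
  shows "phi f lam (x k) - phi f lam (x (Suc k))
           > 1/8 * (eta * theta\<^sup>2 * min 1 (9 * (1 - 2 * eta)\<^sup>2 / LH\<^sup>2)) * min (eg * eh) (eh ^ 3)"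
proof -
  from ncstep obtain u lh j where
    u0: "\<forall>i. x k $ i = 0 \<longrightarrow> u $ i = 0" and nu: "norm u = 1"
    and lhdef: "u \<bullet> ((Smat eg (x k) ** hessf (x k) ** Smat eg (x k)) *v u) = lh"
    and lhle: "lh \<le> - eh / 2"
    and okj: "nc_ok f lam eta theta (x k) (nc_dir gradf lam eg (x k) u lh) (Smat eg (x k)) j"
    and notok: "\<forall>i<j. \<not> nc_ok f lam eta theta (x k) (nc_dir gradf lam eg (x k) u lh) (Smat eg (x k)) i"
    and xs: "x (Suc k) = x k + theta ^ j *\<^sub>R (Smat eg (x k) *v nc_dir gradf lam eg (x k) u lh)"
    unfolding nc_step_def by blast
  have level: "phi f lam (x i) \<le> phi f lam x0" if "i \<le> k" for i
    using that
  proof (induction i)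
    case 0 then show ?case using init by simp
  next
    case (Suc i)
    then have ik: "i < k" by simp
    have "phi f lam (x (Suc i)) \<le> phi f lam (x i)"
      using run[rule_format, OF ik]
    proof
      assume "pg_step f gradf lam eg beta etabar (x i) (t i) (x (Suc i)) (t (Suc i))"
      then obtain jj where ok: "pg_ok f gradf lam beta etabar (x i) jj"
        and xe: "x (Suc i) = prox_l1 (lam / beta ^ jj) (x i - (1 / beta ^ jj) *\<^sub>R gradf (x i))"
        unfolding pg_step_def by blast
      have lt: "phi f lam (x (Suc i)) < phi f lam (x i) - etabar / beta ^ jj * (norm (gmap gradf lam (beta ^ jj) (x i)))\<^sup>2"
        using ok unfolding pg_ok_def xe .
      have "etabar / beta ^ jj * (norm (gmap gradf lam (beta ^ jj) (x i)))\<^sup>2 \<ge> 0"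
        using etabar beta by simp
      then show ?thesis using lt by linarith
    next
      assume "nc_step f gradf hessf lam eg eh eta theta (x i) (t i) (x (Suc i)) (t (Suc i))"
      then obtain uu ll jj where ok: "nc_ok f lam eta theta (x i) (nc_dir gradf lam eg (x i) uu ll) (Smat eg (x i)) jj"
        and xe: "x (Suc i) = x i + theta ^ jj *\<^sub>R (Smat eg (x i) *v nc_dir gradf lam eg (x i) uu ll)"
        unfolding nc_step_def by blast
      have lt: "phi f lam (x (Suc i)) < phi f lam (x i) - eta * theta ^ (2 * jj) * norm (nc_dir gradf lam eg (x i) uu ll) ^ 3"
        using ok unfolding nc_ok_def xe .
      have "eta * theta ^ (2 * jj) * norm (nc_dir gradf lam eg (x i) uu ll) ^ 3 \<ge> 0"
        using eta theta by simp
      then show ?thesis using lt by linarith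
    qed
    then show ?case using Suc ik by simp
  qed
  have lhneg: "lh < 0" using lhle eh by linarith
  define b where "b = min (3 * (1 - 2 * eta) / LH) (min 1 (sqrt eg / \<bar>lh\<bar>))"
  have core: "norm (nc_dir gradf lam eg (x k) u lh) = \<bar>lh\<bar> \<and>
    (\<forall>a. 0 < a \<longrightarrow> a < b \<longrightarrow>
       phi f lam (x k + a *\<^sub>R (Smat eg (x k) *v nc_dir gradf lam eg (x k) u lh))
         < phi f lam (x k) - eta * a\<^sup>2 * \<bar>lh\<bar> ^ 3)"
    unfolding b_def
    by (rule nc_core[OF grad hess hess_cont LH cubic eg eta level[OF order_refl] u0 nu lhdef lhneg])
  have normd: "norm (nc_dir gradf lam eg (x k) u lh) = \<bar>lh\<bar>" using core by blast
  have b1: "b \<le> 1" unfolding b_def by simp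
  have pw2: "theta ^ (2 * i) = (theta ^ i)\<^sup>2" for i :: nat
    by (metis mult.commute power_mult)
  have tj: "theta ^ j \<ge> theta * b"
  proof (cases j)
    case 0
    have "theta * b \<le> theta * 1" using theta b1 by (intro mult_left_mono) auto
    then have "theta * b \<le> 1 * 1" using theta by linarith
    then show ?thesis using 0 by simp
  next
    case (Suc jj)
    have "\<not> nc_ok f lam eta theta (x k) (nc_dir gradf lam eg (x k) u lh) (Smat eg (x k)) jj"
      using notok Suc by simp
    then have nlt: "\<not> phi f lam (x k + theta ^ jj *\<^sub>R (Smat eg (x k) *v nc_dir gradf lam eg (x k) u lh))
        < phi f lam (x k) - eta * (theta ^ jj)\<^sup>2 * \<bar>lh\<bar> ^ 3"
      unfolding nc_ok_def normd pw2[of jj] .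
    have "b \<le> theta ^ jj"
    proof (rule ccontr)
      assume "\<not> b \<le> theta ^ jj"
      then have "theta ^ jj < b" by simp
      moreover have "0 < theta ^ jj" using theta by simp
      ultimately show False using core nlt by blast
    qed
    then show ?thesis using Suc theta by (simp add: mult_left_mono)
  qed
  have okj': "phi f lam (x (Suc k)) < phi f lam (x k) - eta * theta ^ (2 * j) * \<bar>lh\<bar> ^ 3"
    using okj unfolding nc_ok_def normd xs .
  have "theta ^ (2 * j) = (theta ^ j)\<^sup>2" by (rule pw2)
  then have dec: "phi f lam (x k) - phi f lam (x (Suc k)) > eta * (theta ^ j)\<^sup>2 * \<bar>lh\<bar> ^ 3"
    using okj' by simp
  have "eta * (theta ^ j)\<^sup>2 * \<bar>lh\<bar> ^ 3
     \<ge> 1/8 * (eta * theta\<^sup>2 * min 1 (9 * (1 - 2 * eta)\<^sup>2 / LH\<^sup>2)) * min (eg * eh) (eh ^ 3)"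
    by (rule final_arith[OF eta theta LH eg eh(1) lhle b_def tj])
  then show ?thesis using dec by linarith
qed

end
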